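(* Let $\mathcal{A}$ be a probabilistic automaton. Its extended Markov monoid $\mathcal{G}_+$, equipped with (componentwise) concatenation and with the iteration operation $(\mathbf{u},\mathbf{u}_+)\mapsto(\mathbf{u}^\sharp,\mathbf{u}_+)$ on idempotent elements, is a stabilization monoid.
   Context: Fix a finite alphabet $A$ and a probabilistic automaton $\mathcal{A}=(Q,q_0,\Delta,F)$, $\Delta:Q\times A\to\mathcal{D}(Q)$. A limit-word is a map $\mathbf{u}:Q\times Q\to\{0,1\}$ such that every $s$ has some $t$ with $\mathbf{u}(s,t)=1$. Concatenation: $(\mathbf{u}\cdot\mathbf{v})(s,t)=1$ iff there is $q$ with $\mathbf{u}(s,q)=\mathbf{v}(q,t)=1$. $\mathbf{u}$ is idempotent if $\mathbf{u}\cdot\mathbf{u}=\mathbf{u}$; for idempotent $\mathbf{u}$, $s$ is $\mathbf{u}$-recurrent if for all $t$, $\mathbf{u}(s,t)=1\Rightarrow\mathbf{u}(t,s)=1$, and $\mathbf{u}^\sharp(s,t)=1$ iff $\mathbf{u}(s,t)=1$ and $t$ is $\mathbf{u}$-recurrent. For $a\in A$, $\mathbf{a}(s,t)=1$ iff $\Delta(s,a)(t)>0$; $\mathbf{1}$ is the identity. An extended limit-word is a pair $(\mathbf{u},\mathbf{u}_+)$ of limit-words with $\mathbf{u}(s,t)=1\Rightarrow\mathbf{u}_+(s,t)=1$ for all $s,t$. Concatenation of extended limit-words is componentwise; $(\mathbf{u},\mathbf{u}_+)$ is idempotent if both components are idempotent, and then $(\mathbf{u},\mathbf{u}_+)^\sharp=(\mathbf{u}^\sharp,\mathbf{u}_+)$.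 The extended Markov monoid is the smallest set of extended limit-words containing $\{(\mathbf{a},\mathbf{a})\mid a\in A\}\cup\{(\mathbf{1},\mathbf{1})\}$ and closed under concatenation and under iteration of idempotents. A stabilization monoid $(M,\cdot,\sharp)$ is a finite monoid $(M,\cdot)$ with an operation $\sharp:E(M)\to E(M)$, $E(M)$ the set of idempotents of $M$, such that: $(a\cdot b)^\sharp\cdot a=a\cdot(b\cdot a)^\sharp$ whenever $a\cdot b, b\cdot a\in E(M)$; $(e^\sharp)^\sharp=e^\sharp$ for $e\in E(M)$; and $e^\sharp\cdot e=e^\sharp$ for $e\in E(M)$. *)

theory Defs
  imports "HOL-Probability.Probability_Mass_Function"
begin

type_synonym 'q lword = "'q \<Rightarrow> 'q \<Rightarrow> bool"

definition is_limit_word :: "'q lword \<Rightarrow> bool" where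
  "is_limit_word u \<longleftrightarrow> (\<forall>s. \<exists>t. u s t)"

definition lw_mult :: "'q lword \<Rightarrow> 'q lword \<Rightarrow> 'q lword" where
  "lw_mult u v = (\<lambda>s t. \<exists>q. u s q \<and> v q t)"

definition lw_one :: "'q lword" where
  "lw_one = (\<lambda>s t. s = t)"

definition lw_idem :: "'q lword \<Rightarrow> bool" where
  "lw_idem u \<longleftrightarrow> lw_mult u u = u"

definition lw_recurrent :: "'q lword \<Rightarrow> 'q \<Rightarrow> bool" where
  "lw_recurrent u s \<longleftrightarrow> (\<forall>t. u s t \<longrightarrow> u t s)"

definition lw_sharp :: "'q lword \<Rightarrow> 'q lword" where
  "lw_sharp u = (\<lambda>s t. u s t \<and> lw_recurrent u t)"

definition lw_letter :: "('q \<Rightarrow> 'a \<Rightarrow> 'q pmf) \<Rightarrow> 'a \<Rightarrow> 'q lword" where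
  "lw_letter \<Delta> a = (\<lambda>s t. pmf (\<Delta> s a) t > 0)"

definition is_ext_limit_word :: "'q lword \<times> 'q lword \<Rightarrow> bool" where
  "is_ext_limit_word x \<longleftrightarrow> is_limit_word (fst x) \<and> is_limit_word (snd x)
      \<and> (\<forall>s t. fst x s t \<longrightarrow> snd x s t)"

definition ext_mult :: "'q lword \<times> 'q lword \<Rightarrow> 'q lword \<times> 'q lword \<Rightarrow> 'q lword \<times> 'q lword" where
  "ext_mult x y = (lw_mult (fst x) (fst y), lw_mult (snd x) (snd y))"

definition ext_one :: "'q lword \<times> 'q lword" where
  "ext_one = (lw_one, lw_one)"

definition ext_idem :: "'q lword \<times> 'q lword \<Rightarrow> bool" where
  "ext_idem x \<longleftrightarrow> lw_idem (fst x) \<and> lw_idem (snd x)"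

definition ext_sharp :: "'q lword \<times> 'q lword \<Rightarrow> 'q lword \<times> 'q lword" where
  "ext_sharp x = (lw_sharp (fst x), snd x)"

inductive_set ext_markov_monoid :: "('q \<Rightarrow> 'a \<Rightarrow> 'q pmf) \<Rightarrow> ('q lword \<times> 'q lword) set"
  for \<Delta> :: "'q \<Rightarrow> 'a \<Rightarrow> 'q pmf" where
  letter: "(lw_letter \<Delta> a, lw_letter \<Delta> a) \<in> ext_markov_monoid \<Delta>"
| one: "ext_one \<in> ext_markov_monoid \<Delta>"
| mult: "x \<in> ext_markov_monoid \<Delta> \<Longrightarrow> y \<in> ext_markov_monoid \<Delta> \<Longrightarrow> ext_mult x y \<in> ext_markov_monoid \<Delta>"
| sharp: "x \<in> ext_markov_monoid \<Delta> \<Longrightarrow> ext_idem x \<Longrightarrow> ext_sharp x \<in> ext_markov_monoid \<Delta>"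

definition stabilization_monoid :: "'m set \<Rightarrow> ('m \<Rightarrow> 'm \<Rightarrow> 'm) \<Rightarrow> 'm \<Rightarrow> ('m \<Rightarrow> 'm) \<Rightarrow> bool" where
  "stabilization_monoid M mul unit sharp \<longleftrightarrow>
     finite M \<and> unit \<in> M \<and>
     (\<forall>a\<in>M. \<forall>b\<in>M. mul a b \<in> M) \<and>
     (\<forall>a\<in>M. \<forall>b\<in>M. \<forall>c\<in>M. mul (mul a b) c = mul a (mul b c)) \<and>
     (\<forall>a\<in>M. mul unit a = a \<and> mul a unit = a) \<and>
     (\<forall>e\<in>M. mul e e = e \<longrightarrow> sharp e \<in> M \<and> mul (sharp e) (sharp e) = sharp e) \<and>
     (\<forall>a\<in>M. \<forall>b\<in>M. mul (mul a b) (mul a b) = mul a b \<longrightarrow>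
         mul (mul b a) (mul b a) = mul b a \<longrightarrow>
         mul (sharp (mul a b)) a = mul a (sharp (mul b a))) \<and>
     (\<forall>e\<in>M. mul e e = e \<longrightarrow> sharp (sharp e) = sharp e) \<and>
     (\<forall>e\<in>M. mul e e = e \<longrightarrow> mul (sharp e) e = sharp e)"

end

theory Submission
  imports Defs
begin

definition total :: "'q lword \<Rightarrow> bool" where
  "total u \<longleftrightarrow> (\<forall>s. \<exists>t. u s t)"

lemma idem_iff: "lw_idem e \<Longrightarrow> e x y = (\<exists>z. e x z \<and> e z y)"
proof -
  assume "lw_idem e"
  hence "lw_mult e e x y = e x y" unfolding lw_idem_def by simp
  thus ?thesis unfolding lw_mult_def by simp
qed

lemma lw_mult_assoc: "lw_mult (lw_mult a b) c = lw_mult a (lw_mult b c)"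
  unfolding lw_mult_def by (auto intro!: ext)

lemma lw_one_l: "lw_mult lw_one a = a" and lw_one_r: "lw_mult a lw_one = a"
  unfolding lw_mult_def lw_one_def by (auto intro!: ext)

lemma sharp_total:
  fixes u :: "'q::finite lword"
  assumes i: "lw_idem u" and t: "total u"
  shows "total (lw_sharp u)"
  unfolding total_def
proof
  fix s
  have tr: "\<And>x y z. u x y \<Longrightarrow> u y z \<Longrightarrow> u x z" using idem_iff[OF i] by blast
  define R where "R = {(r,t). u t r \<and> \<not> u r t}"
  have "trans R" unfolding R_def trans_def using tr by blast
  moreover have "irrefl R" unfolding R_def irrefl_def by blast
  ultimately have "acyclic R" by (simp add: acyclic_irrefl trancl_id)
  hence "wf R" by (simp add: finite_acyclic_wf)
  obtain t0 where "u s t0" using t unfolding total_def by blast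
  hence "t0 \<in> {r. u s r}" by simp
  then obtain t where ut0: "t \<in> {r. u s r}" and min0: "\<And>r. (r,t) \<in> R \<Longrightarrow> r \<notin> {r. u s r}"
    using wfE_min[OF \<open>wf R\<close>] by metis
  have ut: "u s t" using ut0 by simp
  have min: "\<And>r. (r,t) \<in> R \<Longrightarrow> \<not> u s r" using min0 by simp
  have "lw_recurrent u t" unfolding lw_recurrent_def
  proof (intro allI impI)
    fix r assume "u t r"
    show "u r t"
    proof (rule ccontr)
      assume "\<not> u r t"
      hence "(r,t) \<in> R" using \<open>u t r\<close> unfolding R_def by blast
      thus False using min tr[OF ut \<open>u t r\<close>] by blast
    qed
  qed
  thus "\<exists>t. lw_sharp u s t" using ut unfolding lw_sharp_def by blast
qed

lemma inv: "x \<in> ext_markov_monoid (\<Delta>::'q::finite \<Rightarrow> 'a \<Rightarrow> 'q pmf) \<Longrightarrow> total (fst x)"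
proof (induction rule: ext_markov_monoid.induct)
  case (letter a)
  have "\<exists>t. 0 < pmf (\<Delta> s a) t" for s
  proof -
    obtain t where "t \<in> set_pmf (\<Delta> s a)" using set_pmf_not_empty by fast
    thus "\<exists>t. 0 < pmf (\<Delta> s a) t" by (meson pmf_positive)
  qed
  thus ?case unfolding total_def lw_letter_def by simp
next
  case one thus ?case by (auto simp: total_def ext_one_def lw_one_def)
next
  case (mult x y)
  have "\<exists>t. lw_mult (fst x) (fst y) s t" for s
  proof -
    obtain q where "fst x s q" using mult.IH(1) unfolding total_def by blast
    moreover obtain t where "fst y q t" using mult.IH(2) unfolding total_def by blast
    ultimately show ?thesis unfolding lw_mult_def by blast
  qed
  thus ?case by (simp add: total_def ext_mult_def)
next
  case (sharp x)
  thus ?case using sharp_total[of "fst x"] by (simp add: ext_sharp_def ext_idem_def)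
qed

lemma sharp_idem: "lw_idem u \<Longrightarrow> total u \<Longrightarrow> lw_idem (lw_sharp u)"
proof -
  assume i: "lw_idem u" and tt: "total u"
  have tr: "\<And>x y z. u x y \<Longrightarrow> u y z \<Longrightarrow> u x z" using idem_iff[OF i] by blast
  show ?thesis unfolding lw_idem_def lw_mult_def lw_sharp_def
  proof (intro ext iffI)
    fix s t assume "\<exists>q. (u s q \<and> lw_recurrent u q) \<and> u q t \<and> lw_recurrent u t"
    thus "u s t \<and> lw_recurrent u t" using tr by blast
  next
    fix s t assume a: "u s t \<and> lw_recurrent u t"
    obtain z where "u t z" using tt unfolding total_def by blast
    hence "u z t" using a unfolding lw_recurrent_def by blast
    hence "u t t" using \<open>u t z\<close> tr by blast
    thus "\<exists>q. (u s q \<and> lw_recurrent u q) \<and> u q t \<and> lw_recurrent u t" using a by blast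
  qed
qed

lemma sharp_sharp: "lw_sharp (lw_sharp u) = lw_sharp u"
  unfolding lw_sharp_def lw_recurrent_def by (auto intro!: ext)

lemma sharp_mult: "lw_idem u \<Longrightarrow> total u \<Longrightarrow> lw_mult (lw_sharp u) u = lw_sharp u"
proof -
  assume i: "lw_idem u" and tt: "total u"
  have tr: "\<And>x y z. u x y \<Longrightarrow> u y z \<Longrightarrow> u x z" using idem_iff[OF i] by blast
  show ?thesis unfolding lw_mult_def lw_sharp_def
  proof (intro ext iffI)
    fix s t assume "\<exists>q. (u s q \<and> lw_recurrent u q) \<and> u q t"
    then obtain q where q: "u s q" "lw_recurrent u q" "u q t" by blast
    have "lw_recurrent u t" unfolding lw_recurrent_def
    proof (intro allI impI)
      fix r assume "u t r"
      hence "u q r" using q tr by blast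
      hence "u r q" using q(2) unfolding lw_recurrent_def by blast
      thus "u r t" using q tr by blast
    qed
    thus "u s t \<and> lw_recurrent u t" using q tr by blast
  next
    fix s t assume a: "u s t \<and> lw_recurrent u t"
    obtain z where "u t z" using tt unfolding total_def by blast
    hence "u z t" using a unfolding lw_recurrent_def by blast
    hence "u t t" using \<open>u t z\<close> tr by blast
    thus "\<exists>q. (u s q \<and> lw_recurrent u q) \<and> u q t" using a by blast
  qed
qed

lemma main:
  assumes ie: "lw_idem (lw_mult u v)" and if': "lw_idem (lw_mult v u)"
    and tu: "total u" and tv: "total v"
  shows "lw_mult (lw_sharp (lw_mult u v)) u = lw_mult u (lw_sharp (lw_mult v u))"
proof -
  define e where "e = lw_mult u v"
  define f where "f = lw_mult v u"
  have eI: "\<And>x y. e x y = (\<exists>z. u x z \<and> v z y)" unfolding e_def lw_mult_def by simp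
  have fI: "\<And>x y. f x y = (\<exists>z. v x z \<and> u z y)" unfolding f_def lw_mult_def by simp
  have etr: "\<And>x y z. e x y \<Longrightarrow> e y z \<Longrightarrow> e x z" using idem_iff[OF ie] unfolding e_def by blast
  have ftr: "\<And>x y z. f x y \<Longrightarrow> f y z \<Longrightarrow> f x z" using idem_iff[OF if'] unfolding f_def by blast
  have "lw_mult (lw_sharp e) u = lw_mult u (lw_sharp f)"
    unfolding lw_mult_def lw_sharp_def
  proof (intro ext iffI)
    fix s t assume "\<exists>q. (e s q \<and> lw_recurrent e q) \<and> u q t"
    then obtain q where q: "e s q" "lw_recurrent e q" "u q t" by blast
    then obtain p where p: "u s p" "v p q" using eI by blast
    have fpt: "f p t" using p q fI by blast
    have "lw_recurrent f t" unfolding lw_recurrent_def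
    proof (intro allI impI)
      fix r assume "f t r"
      then obtain x where x: "v t x" "u x r" using fI by blast
      obtain z where z: "v r z" using tv unfolding total_def by blast
      have "e q x" using q x eI by blast
      moreover have "e x z" using x z eI by blast
      ultimately have "e q z" using etr by blast
      hence "e z q" using q(2) unfolding lw_recurrent_def by blast
      then obtain w where w: "u z w" "v w q" using eI by blast
      have "f r w" using z w fI by blast
      moreover have "f w t" using w q fI by blast
      ultimately show "f r t" using ftr by blast
    qed
    thus "\<exists>q. u s q \<and> f q t \<and> lw_recurrent f t" using p fpt by blast
  next
    fix s t assume "\<exists>q. u s q \<and> f q t \<and> lw_recurrent f t"
    then obtain q where q: "u s q" "f q t" "lw_recurrent f t" by blast
    obtain y where "v t y" using tv unfolding total_def by blast
    moreover obtain z where "u y z" using tu unfolding total_def by blast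
    ultimately have "f t z" using fI by blast
    hence "f z t" using q unfolding lw_recurrent_def by blast
    hence "f t t" using \<open>f t z\<close> ftr by blast
    then obtain a where a: "v t a" "u a t" using fI by blast
    obtain p where p: "v q p" "u p t" using q fI by blast
    have "e s p" using q p eI by blast
    moreover have "e p a" using p a eI by blast
    ultimately have esa: "e s a" using etr by blast
    have "lw_recurrent e a" unfolding lw_recurrent_def
    proof (intro allI impI)
      fix r assume "e a r"
      then obtain x where x: "u a x" "v x r" using eI by blast
      obtain z where z: "u r z" using tu unfolding total_def by blast
      have "f t x" using a x fI by blast
      moreover have "f x z" using x z fI by blast
      ultimately have "f t z" using ftr by blast
      hence "f z t" using q(3) unfolding lw_recurrent_def by blast
      then obtain w where w: "v z w" "u w t" using fI by blast
      have "e r w" using z w eI by blast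
      moreover have "e w a" using w a eI by blast
      ultimately show "e r a" using etr by blast
    qed
    thus "\<exists>q. (e s q \<and> lw_recurrent e q) \<and> u q t" using esa a by blast
  qed
  thus ?thesis unfolding e_def f_def .
qed

theorem lemma3p12:
  fixes \<Delta> :: "'q::finite \<Rightarrow> 'a::finite \<Rightarrow> 'q pmf"
  shows "stabilization_monoid (ext_markov_monoid \<Delta>) ext_mult ext_one ext_sharp"
  unfolding stabilization_monoid_def
proof (intro conjI ballI impI)
  show "finite (ext_markov_monoid \<Delta>)" by (rule finite_subset[OF subset_UNIV finite_class.finite_UNIV])
  show "ext_one \<in> ext_markov_monoid \<Delta>" by (rule ext_markov_monoid.one)
next
  fix a b assume "a \<in> ext_markov_monoid \<Delta>" "b \<in> ext_markov_monoid \<Delta>"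
  thus "ext_mult a b \<in> ext_markov_monoid \<Delta>" by (rule ext_markov_monoid.mult)
next
  fix a b c :: "'q lword \<times> 'q lword"
  show "ext_mult (ext_mult a b) c = ext_mult a (ext_mult b c)"
    by (simp add: ext_mult_def lw_mult_assoc)
next
  fix a :: "'q lword \<times> 'q lword"
  show "ext_mult ext_one a = a" "ext_mult a ext_one = a"
    by (simp_all add: ext_mult_def ext_one_def lw_one_l lw_one_r)
next
  fix e assume "e \<in> ext_markov_monoid \<Delta>" "ext_mult e e = e"
  hence ei: "ext_idem e" unfolding ext_idem_def ext_mult_def lw_idem_def by (metis fst_conv snd_conv)
  thus "ext_sharp e \<in> ext_markov_monoid \<Delta>"
    using \<open>e \<in> _\<close> by (rule ext_markov_monoid.sharp[rotated])
  show "ext_mult (ext_sharp e) (ext_sharp e) = ext_sharp e"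
    using ei sharp_idem[of "fst e"] inv[OF \<open>e \<in> _\<close>]
    by (simp add: ext_idem_def ext_mult_def ext_sharp_def lw_idem_def)
  show "ext_sharp (ext_sharp e) = ext_sharp e"
    by (simp add: ext_sharp_def sharp_sharp)
  show "ext_mult (ext_sharp e) e = ext_sharp e"
    using ei sharp_mult[of "fst e"] inv[OF \<open>e \<in> _\<close>]
    by (simp add: ext_idem_def ext_mult_def ext_sharp_def lw_idem_def)
next
  fix a b assume a: "a \<in> ext_markov_monoid \<Delta>" and b: "b \<in> ext_markov_monoid \<Delta>"
    and ab: "ext_mult (ext_mult a b) (ext_mult a b) = ext_mult a b"
    and ba: "ext_mult (ext_mult b a) (ext_mult b a) = ext_mult b a"
  have "lw_idem (lw_mult (fst a) (fst b))" "lw_idem (lw_mult (fst b) (fst a))"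
    using ab ba unfolding ext_mult_def lw_idem_def by (metis fst_conv snd_conv)+
  from main[OF this inv[OF a] inv[OF b]]
  show "ext_mult (ext_sharp (ext_mult a b)) a = ext_mult a (ext_sharp (ext_mult b a))"
    by (simp add: ext_mult_def ext_sharp_def lw_mult_assoc)
qed

end
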